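(* Suppose that $H$ has a $U_\ell$-operator, where $\ell$ is a prime dividing $N$ and $s\ge1$ is the $\ell$-adic valuation of $N$. Let $g,h$ be relatively prime divisors of $N$ not divisible by $\ell$, let $\chi\in X_N$, $\psi=\theta\chi^{-1}$, and let $t\le s$ be a positive integer such that $f_\chi$ divides $N/\ell^t$. If $t<s$, then $$U_\ell\,\alpha^{\ell^tg,h}_{\chi,\psi}=\ell\,\alpha^{\ell^{t-1}g,h}_{\chi,\psi},$$ and if $t=s$ (and $\ell^sg\neq N$ in case $H$ is cuspidal at zero), then $$(U_\ell-\chi^{-1}(\ell))\,\alpha^{\ell^sg,h}_{\chi,\psi}=(\ell-1)\,\alpha^{\ell^{s-1}g,h}_{\chi,\psi}.$$
   Context: $p$ is an odd prime, $M$ a positive integer with $p\nmid M\varphi(M)$, $N=Mp$, $\Delta=(\mathbb{Z}/N\mathbb{Z})^\times/\langle-1\rangle$. $H$ is either a space of level $N$ modular symbols — a $\mathbb{Z}_p[\Delta]$-module spanned by symbols $[u:v]$ ($u,v\in\mathbb{Z}/N\mathbb{Z}$ generating the unit ideal) with relations $[u:v]=[-u:-v]=-[-v:u]$, $[u:v]=[u:u+v]+[u+v:v]$, $\langle a\rangle[u:v]=[au:av]$ — or a space of level $N$ cuspidal-at-zero modular symbols, defined the same way but with symbols only for $u,v$ both nonzero and the second relation only for $u\neq-v$ (in that case symbols $[u:v]$ with $u=0$ or $v=0$ are interpreted as $0$). For a prime $\ell\mid N$, a $U_\ell$-operator is a $\mathbb{Z}_p[\Delta]$-linear endomorphism $U_\ell$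 of $H$ with $U_\ell[\ell u:v]=\sum_{k=0}^{\ell-1}[u+kN/\ell:v]$ for all $u,v\in\mathbb{Z}/N\mathbb{Z}$ with $(\ell u,v)=(1)$ (and $\ell u\neq0$ if $H$ is cuspidal at zero); it is extended $\mathcal{O}$-linearly. $\theta:\Delta\to\mathbb{C}_p^\times$ is a character, $\mathcal{O}=\mathbb{Z}_p[\mu_{\varphi(N)}]$, $X_N=\mathrm{Hom}((\mathbb{Z}/N\mathbb{Z})^\times,\mathcal{O}^\times)$, $f_\chi$ is the conductor of $\chi$, and $\chi(\ell)$ is the value of the associated primitive Dirichlet character. $e_\theta=\frac1{\varphi(N)}\sum_a\theta^{-1}(a)\langle a\rangle$, $H^\theta=e_\theta(H\otimes\mathcal{O})$, and for relatively prime divisors $g,h$ of $N$, $\alpha^{g,h}_{\chi,\psi}=\frac1{\varphi(N)^2}\sum_{a,b\in(\mathbb{Z}/N\mathbb{Z})^\times}\chi^{-1}(a)\psi^{-1}(b)[ga:hb]$. *)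

theory Defs
  imports "HOL-Computational_Algebra.Computational_Algebra" "HOL-Number_Theory.Number_Theory"
begin

text \<open>Coefficient ring: an abstract commutative ring 'r (standing in for O = Z_p[mu_phi(N)]).
  Residues mod N are represented by integers; everything is N-periodic.\<close>

definition ring_inv :: "'r::comm_ring_1 \<Rightarrow> 'r" where
  "ring_inv x = (SOME y. x * y = 1)"

definition unimod :: "nat \<Rightarrow> int \<Rightarrow> int \<Rightarrow> bool" where
  "unimod N u v \<longleftrightarrow> gcd (gcd u v) (int N) = 1"

definition units_mod :: "nat \<Rightarrow> int set" where
  "units_mod N = {a. 0 \<le> a \<and> a < int N \<and> coprime a (int N)}"

definition dchar :: "nat \<Rightarrow> (int \<Rightarrow> 'r::comm_ring_1) \<Rightarrow> bool" where
  "dchar N \<chi> \<longleftrightarrow> (\<forall>a. \<chi> a = \<chi> (a mod int N)) \<and> \<chi> 1 = 1 \<and>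
     (\<forall>a b. coprime a (int N) \<longrightarrow> coprime b (int N) \<longrightarrow> \<chi> (a * b) = \<chi> a * \<chi> b) \<and>
     (\<forall>a. \<not> coprime a (int N) \<longrightarrow> \<chi> a = 0)"

definition cinv :: "nat \<Rightarrow> (int \<Rightarrow> 'r::comm_ring_1) \<Rightarrow> int \<Rightarrow> 'r" where
  "cinv N \<chi> a = (if coprime a (int N) then ring_inv (\<chi> a) else 0)"

definition conductor :: "nat \<Rightarrow> (int \<Rightarrow> 'r::comm_ring_1) \<Rightarrow> nat" where
  "conductor N \<chi> = (LEAST d. 0 < d \<and> d dvd N \<and>
      (\<forall>a. coprime a (int N) \<longrightarrow> [a = 1] (mod int d) \<longrightarrow> \<chi> a = 1))"

text \<open>Value at l of the primitive Dirichlet character associated to chi.\<close>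
definition prim_val :: "nat \<Rightarrow> (int \<Rightarrow> 'r::comm_ring_1) \<Rightarrow> nat \<Rightarrow> 'r" where
  "prim_val N \<chi> l = (let f = conductor N \<chi> in
     if coprime (int l) (int f)
     then \<chi> (SOME a. coprime a (int N) \<and> [a = int l] (mod int f))
     else 0)"

text \<open>A (cuspidal-at-zero if cusp) level N modular symbol space, already tensored with 'r:
  an 'r-module spanned by symbols symb u v satisfying the defining relations, with the
  diamond action dia.\<close>
definition modsym_space :: "nat \<Rightarrow> bool \<Rightarrow> ('r::comm_ring_1 \<Rightarrow> 'h::ab_group_add \<Rightarrow> 'h)
    \<Rightarrow> (int \<Rightarrow> int \<Rightarrow> 'h) \<Rightarrow> (int \<Rightarrow> 'h \<Rightarrow> 'h) \<Rightarrow> bool" where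
  "modsym_space N cusp scale symb dia \<longleftrightarrow>
     Modules.module scale \<and>
     Modules.module.span scale {symb u v | u v. unimod N u v} = UNIV \<and>
     (\<forall>u v. symb u v = symb (u mod int N) (v mod int N)) \<and>
     (cusp \<longrightarrow> (\<forall>u v. (u mod int N = 0 \<or> v mod int N = 0) \<longrightarrow> symb u v = 0)) \<and>
     (\<forall>u v. unimod N u v \<longrightarrow> symb u v = symb (-u) (-v) \<and> symb u v = - symb (-v) u) \<and>
     (\<forall>u v. unimod N u v \<longrightarrow>
        (cusp \<longrightarrow> u mod int N \<noteq> 0 \<and> v mod int N \<noteq> 0 \<and> (u + v) mod int N \<noteq> 0) \<longrightarrow>
        symb u v = symb u (u + v) + symb (u + v) v) \<and>
     (\<forall>a. coprime a (int N) \<longrightarrow> Modules.module_hom scale scale (dia a) \<and>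
        (\<forall>u v. unimod N u v \<longrightarrow> dia a (symb u v) = symb (a * u) (a * v)))"

definition U_op :: "nat \<Rightarrow> bool \<Rightarrow> ('r::comm_ring_1 \<Rightarrow> 'h::ab_group_add \<Rightarrow> 'h)
    \<Rightarrow> (int \<Rightarrow> int \<Rightarrow> 'h) \<Rightarrow> (int \<Rightarrow> 'h \<Rightarrow> 'h) \<Rightarrow> nat \<Rightarrow> ('h \<Rightarrow> 'h) \<Rightarrow> bool" where
  "U_op N cusp scale symb dia l U \<longleftrightarrow>
     Modules.module_hom scale scale U \<and>
     (\<forall>a x. coprime a (int N) \<longrightarrow> U (dia a x) = dia a (U x)) \<and>
     (\<forall>u v. unimod N (int l * u) v \<longrightarrow> (cusp \<longrightarrow> (int l * u) mod int N \<noteq> 0) \<longrightarrow>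
        U (symb (int l * u) v) = (\<Sum>k<l. symb (u + int k * int (N div l)) v))"

definition alpha :: "nat \<Rightarrow> ('r::comm_ring_1 \<Rightarrow> 'h::ab_group_add \<Rightarrow> 'h) \<Rightarrow> (int \<Rightarrow> int \<Rightarrow> 'h)
    \<Rightarrow> (int \<Rightarrow> 'r) \<Rightarrow> (int \<Rightarrow> 'r) \<Rightarrow> nat \<Rightarrow> nat \<Rightarrow> 'h" where
  "alpha N scale symb \<chi> \<psi> g h =
     scale (ring_inv ((of_nat (totient N))^2))
       (\<Sum>a\<in>units_mod N. \<Sum>b\<in>units_mod N.
          scale (cinv N \<chi> a * cinv N \<psi> b) (symb (int g * a) (int h * b)))"

end

theory Submission
  imports Defs
begin

lemma ring_inv_eq:
  fixes x y :: "'r::comm_ring_1"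
  assumes "x * y = 1" shows "ring_inv x = y"
proof -
  have "x * ring_inv x = 1" unfolding ring_inv_def by (rule someI[of _ y]) (rule assms)
  hence "y * (x * ring_inv x) = y" by simp
  thus ?thesis using assms by (simp add: mult.assoc[symmetric] mult.commute)
qed

lemma coprime_mod_iff: "(n::int) > 0 \<Longrightarrow> coprime (a mod n) n \<longleftrightarrow> coprime a n"
  by (metis coprime_commute coprime_mod_right_iff less_irrefl)

lemma inv_exists:
  fixes a n :: int assumes "coprime a n"
  obtains a' where "[a * a' = 1] (mod n)" "coprime a' n"
proof -
  obtain a' where h: "[a * a' = 1] (mod n)" using cong_solve_coprime_int[OF assms] by blast
  have "coprime a' n" using h by (metis coprime_iff_invertible_int mult.commute cong_sym)
  thus ?thesis using that h by blast
qed

lemma dchar_cong: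
  assumes "dchar N \<chi>" "[a = b] (mod int N)"
  shows "\<chi> a = \<chi> b"
  using assms unfolding dchar_def cong_def by metis

lemma dchar_unit:
  assumes "dchar N \<chi>" "coprime a (int N)"
  shows "\<chi> a * cinv N \<chi> a = 1"
proof -
  obtain a' where h: "[a * a' = 1] (mod int N)" "coprime a' (int N)" using inv_exists assms(2) by blast
  have "\<chi> a * \<chi> a' = \<chi> (a * a')" using assms h unfolding dchar_def by metis
  also have "\<dots> = \<chi> 1" using dchar_cong[OF assms(1) h(1)] .
  also have "\<dots> = 1" using assms(1) unfolding dchar_def by simp
  finally have "ring_inv (\<chi> a) = \<chi> a'" by (rule ring_inv_eq)
  thus ?thesis using assms(2) \<open>\<chi> a * \<chi> a' = _\<close> \<open>\<chi> (a * a') = \<chi> 1\<close> assms(1)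
    unfolding cinv_def dchar_def by simp
qed

lemma cinv_mult:
  assumes "dchar N \<chi>" "coprime a (int N)" "coprime b (int N)"
  shows "cinv N \<chi> (a * b) = cinv N \<chi> a * cinv N \<chi> b"
proof -
  have m: "\<chi> (a*b) = \<chi> a * \<chi> b" using assms unfolding dchar_def by blast
  have "\<chi> (a*b) * (cinv N \<chi> a * cinv N \<chi> b) = 1"
    unfolding m using dchar_unit[OF assms(1,2)] dchar_unit[OF assms(1,3)]
    by (metis (no_types, lifting) mult.assoc mult.left_commute mult_1_right)
  hence "ring_inv (\<chi> (a*b)) = cinv N \<chi> a * cinv N \<chi> b" by (rule ring_inv_eq)
  thus ?thesis using assms unfolding cinv_def by simp
qed

lemma cinv_cong:
  assumes "dchar N \<chi>" "[a = b] (mod int N)"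
  shows "cinv N \<chi> a = cinv N \<chi> b"
proof -
  have "coprime a (int N) \<longleftrightarrow> coprime b (int N)"
    using assms(2) by (metis cong_imp_coprime cong_sym)
  thus ?thesis using dchar_cong[OF assms] unfolding cinv_def by simp
qed

lemma conductor_props:
  assumes "dchar N \<chi>" "N > 0"
  shows "0 < conductor N \<chi> \<and> conductor N \<chi> dvd N \<and>
      (\<forall>a. coprime a (int N) \<longrightarrow> [a = 1] (mod int (conductor N \<chi>)) \<longrightarrow> \<chi> a = 1)"
  unfolding conductor_def
proof (rule LeastI_ex)
  show "\<exists>d. 0 < d \<and> d dvd N \<and> (\<forall>a. coprime a (int N) \<longrightarrow> [a = 1] (mod int d) \<longrightarrow> \<chi> a = 1)"
  proof (intro exI[of _ N] conjI allI impI)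
    fix a assume "[a = 1] (mod int N)"
    hence "\<chi> a = \<chi> 1" by (rule dchar_cong[OF assms(1)])
    thus "\<chi> a = 1" using assms(1) unfolding dchar_def by simp
  qed (use assms in auto)
qed

lemma char_cond:
  assumes "dchar N \<chi>" "N > 0" "coprime a (int N)" "coprime b (int N)"
    "[a = b] (mod int (conductor N \<chi>))"
  shows "\<chi> a = \<chi> b"
proof -
  note cp = conductor_props[OF assms(1,2)]
  obtain a' where h: "[a * a' = 1] (mod int N)" "coprime a' (int N)" using inv_exists assms(3) by blast
  define e where "e = b * a'"
  have ce: "coprime e (int N)" using assms(4) h(2) unfolding e_def by simp
  have "[a * a' = 1] (mod int (conductor N \<chi>))"
    using h(1) cp by (meson cong_dvd_modulus int_dvd_int_iff)
  moreover have "[b * a' = a * a'] (mod int (conductor N \<chi>))"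
    using assms(5) by (simp add: cong_scalar_right cong_sym)
  ultimately have "[e = 1] (mod int (conductor N \<chi>))" unfolding e_def using cong_trans by blast
  hence e1: "\<chi> e = 1" using cp ce by blast
  have "\<chi> (e * a) = \<chi> e * \<chi> a" using ce assms(3,1) unfolding dchar_def by blast
  hence "\<chi> (e * a) = \<chi> a" using e1 by simp
  moreover have "[e * a = b] (mod int N)"
  proof -
    have "[b * (a * a') = b * 1] (mod int N)" using h(1) by (rule cong_scalar_left)
    thus ?thesis unfolding e_def by (simp add: ac_simps)
  qed
  ultimately show ?thesis using dchar_cong[OF assms(1)] by metis
qed

lemma cinv_cond:
  assumes "dchar N \<chi>" "N > 0" "coprime a (int N)" "coprime b (int N)"
    "[a = b] (mod int (conductor N \<chi>))"
  shows "cinv N \<chi> a = cinv N \<chi> b"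
  using char_cond[OF assms] assms(3,4) unfolding cinv_def by simp

lemma conductor_cinv:
  assumes "dchar N \<chi>"
  shows "conductor N (cinv N \<chi>) = conductor N \<chi>"
proof -
  have "\<And>a. coprime a (int N) \<Longrightarrow> (cinv N \<chi> a = 1) = (\<chi> a = 1)"
  proof -
    fix a assume "coprime a (int N)"
    note u = dchar_unit[OF assms this]
    show "(cinv N \<chi> a = 1) = (\<chi> a = 1)"
      using u by (metis mult_1_left mult_1_right)
  qed
  thus ?thesis unfolding conductor_def by (metis (no_types, lifting))
qed


lemma units_mod_finite: "finite (units_mod N)"
  unfolding units_mod_def by (rule finite_subset[of _ "{0..<int N}"]) auto

lemma reindex_shift:
  fixes scale :: "'r::comm_ring_1 \<Rightarrow> 'h::ab_group_add \<Rightarrow> 'h" and D e :: int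
  assumes "N > 0" "\<And>x. coprime x (int N) \<longleftrightarrow> coprime x D" "D dvd e" "D dvd int N"
    "\<And>a b. coprime a (int N) \<Longrightarrow> coprime b (int N) \<Longrightarrow> [a = b] (mod D) \<Longrightarrow> C a = C b"
  shows "(\<Sum>a\<in>units_mod N. scale (C a) (W ((a + e) mod int N))) = (\<Sum>a\<in>units_mod N. scale (C a) (W a))"
proof (rule sum.reindex_bij_witness[where j = "\<lambda>a. (a + e) mod int N" and i = "\<lambda>x. (x - e) mod int N"])
  have cg: "coprime ((x + y) mod int N) (int N) \<longleftrightarrow> coprime x (int N)" if "D dvd y" for x y
  proof -
    have "coprime ((x + y) mod int N) (int N) \<longleftrightarrow> coprime (x + y) D"
      using assms(1,2) coprime_mod_iff[of "int N"] by simp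
    also have "\<dots> \<longleftrightarrow> coprime x D" using that
      by (metis cong_iff_dvd_diff cong_imp_coprime cong_sym add_diff_cancel_left')
    finally show ?thesis using assms(2) by simp
  qed
  fix a assume a: "a \<in> units_mod N"
  show "(a + e) mod int N \<in> units_mod N" using a cg[OF assms(3)] assms(1) unfolding units_mod_def by auto
  show "((a + e) mod int N - e) mod int N = a" using a unfolding units_mod_def
    by (simp add: mod_diff_left_eq)
  have "[(a + e) mod int N = a] (mod D)"
  proof -
    have "[(a + e) mod int N = a + e] (mod D)"
      using assms(4) by (meson cong_dvd_modulus cong_mod_left cong_refl)
    moreover have "[a + e = a] (mod D)" using assms(3)
      by (simp add: cong_iff_dvd_diff)
    ultimately show ?thesis by (rule cong_trans)
  qed
  hence "C ((a + e) mod int N) = C a"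
    using assms(5) a cg[OF assms(3)] assms(1) unfolding units_mod_def by auto
  thus "scale (C ((a + e) mod int N)) (W ((a + e) mod int N)) = scale (C a) (W ((a + e) mod int N))"
    by simp
next
  have cg: "coprime ((x + y) mod int N) (int N) \<longleftrightarrow> coprime x (int N)" if "D dvd y" for x y
  proof -
    have "coprime ((x + y) mod int N) (int N) \<longleftrightarrow> coprime (x + y) D"
      using assms(1,2) coprime_mod_iff[of "int N"] by simp
    also have "\<dots> \<longleftrightarrow> coprime x D" using that
      by (metis cong_iff_dvd_diff cong_imp_coprime cong_sym add_diff_cancel_left')
    finally show ?thesis using assms(2) by simp
  qed
  fix x assume a: "x \<in> units_mod N"
  have "D dvd - e" using assms(3) by simp
  from cg[OF this, of x]
  show "(x - e) mod int N \<in> units_mod N" using a assms(1) unfolding units_mod_def by auto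
  show "((x - e) mod int N + e) mod int N = x" using a unfolding units_mod_def
    by (simp add: mod_add_left_eq)
qed


lemma unique_k:
  fixes z c :: int
  assumes "prime l" "coprime c (int l)"
  obtains k0 where "k0 < l" "\<And>k. k < l \<Longrightarrow> (int l dvd z + int k * c \<longleftrightarrow> k = k0)"
proof -
  have l0: "int l > 0" using assms(1) prime_gt_0_nat by auto
  obtain c' where c': "[c * c' = 1] (mod int l)" using cong_solve_coprime_int[OF assms(2)] by blast
  define k0 where "k0 = nat ((- z * c') mod int l)"
  have k0l: "k0 < l" unfolding k0_def using l0 by (simp add: nat_less_iff)
  have ik0: "int k0 = (- z * c') mod int l" unfolding k0_def using l0 by simp
  have d0: "int l dvd z + int k0 * c"
  proof -
    have "[int k0 * c = (- z * c') * c] (mod int l)" unfolding ik0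
      by (rule cong_scalar_right) simp
    moreover have "[(- z * c') * c = - z * 1] (mod int l)"
      using cong_scalar_left[OF c', of "-z"] by (simp add: ac_simps)
    ultimately have "[int k0 * c = - z] (mod int l)" using cong_trans by fastforce
    thus ?thesis by (simp add: cong_iff_dvd_diff add.commute)
  qed
  have "int l dvd z + int k * c \<longleftrightarrow> k = k0" if kl: "k < l" for k
  proof
    assume "int l dvd z + int k * c"
    from dvd_diff[OF this d0] have "int l dvd (int k - int k0) * c"
      by (simp add: algebra_simps)
    hence "int l dvd int k - int k0" using assms(2) coprime_commute coprime_dvd_mult_left_iff by blast
    show "k = k0"
    proof (rule ccontr)
      assume ne: "k \<noteq> k0"
      hence "int k - int k0 \<noteq> 0" by simp
      from dvd_imp_le_int[OF this \<open>int l dvd int k - int k0\<close>]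
      have "int l \<le> \<bar>int k - int k0\<bar>" by simp
      thus False using kl k0l by linarith
    qed
  qed (use d0 in simp)
  thus ?thesis using that k0l by blast
qed

lemma sum_single_k:
  fixes f :: "nat \<Rightarrow> 'h::ab_group_add"
  assumes "k0 < l" "\<And>k. k < l \<Longrightarrow> (P k \<longleftrightarrow> k = k0)"
  shows "(\<Sum>k<l. if P k then f k else 0) = f k0"
proof -
  have "(\<Sum>k<l. if P k then f k else 0) = (\<Sum>k<l. if k = k0 then f k else 0)"
    using assms(2) by (intro sum.cong) auto
  thus ?thesis using assms(1) by simp
qed

lemma key_lt:
  fixes scale :: "'r::comm_ring_1 \<Rightarrow> 'h::ab_group_add \<Rightarrow> 'h" and D c :: int
  assumes "Modules.module scale" "N > 0" "\<And>x. coprime x (int N) \<longleftrightarrow> coprime x D" "D dvd c" "D dvd int N"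
    "\<And>a b. coprime a (int N) \<Longrightarrow> coprime b (int N) \<Longrightarrow> [a = b] (mod D) \<Longrightarrow> C a = C b"
  shows "(\<Sum>a\<in>units_mod N. scale (C a) (\<Sum>k<l. W ((a + int k * c) mod int N)))
     = scale (of_nat l) (\<Sum>a\<in>units_mod N. scale (C a) (W a))"
proof -
  interpret m: Modules.module scale by fact
  have "(\<Sum>a\<in>units_mod N. scale (C a) (\<Sum>k<l. W ((a + int k * c) mod int N)))
      = (\<Sum>a\<in>units_mod N. \<Sum>k<l. scale (C a) (W ((a + int k * c) mod int N)))"
    by (simp add: m.scale_sum_right)
  also have "\<dots> = (\<Sum>k<l. \<Sum>a\<in>units_mod N. scale (C a) (W ((a + int k * c) mod int N)))"
    by (rule sum.swap)
  also have "\<dots> = (\<Sum>k<l. \<Sum>a\<in>units_mod N. scale (C a) (W a))"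
  proof (rule sum.cong[OF refl])
    fix k show "(\<Sum>a\<in>units_mod N. scale (C a) (W ((a + int k * c) mod int N))) = (\<Sum>a\<in>units_mod N. scale (C a) (W a))"
      by (rule reindex_shift[OF assms(2,3) _ assms(5,6)]) (use assms(4) in simp)
  qed
  also have "\<dots> = scale (of_nat l) (\<Sum>a\<in>units_mod N. scale (C a) (W a))"
    by (simp add: m.sum_constant_scale)
  finally show ?thesis .
qed


lemma coprime_prime_not_dvd:
  fixes x :: int assumes "prime l" "coprime x (int l)" shows "\<not> int l dvd x"
proof
  assume "int l dvd x"
  hence "is_unit (int l)" using assms(2) by (meson coprime_common_divisor dvd_refl)
  thus False using assms(1) by (simp add: prime_int_iff)
qed

lemma reindex_filter:
  fixes scale :: "'r::comm_ring_1 \<Rightarrow> 'h::ab_group_add \<Rightarrow> 'h" and D e :: int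
  assumes "N > 0" "prime l" "\<And>x. coprime x (int N) \<longleftrightarrow> coprime x (int l) \<and> coprime x D"
    "D dvd e" "int l * D dvd int N"
    "\<And>a b. coprime a (int N) \<Longrightarrow> coprime b (int N) \<Longrightarrow> [a = b] (mod D) \<Longrightarrow> C a = C b"
  shows "(\<Sum>a\<in>units_mod N. if \<not> int l dvd a + e then scale (C a) (W ((a + e) mod int N)) else 0)
       = (\<Sum>x\<in>units_mod N. if \<not> int l dvd x - e then scale (C x) (W x) else 0)"
proof -
  have Dn: "D dvd int N" "int l dvd int N" using assms(5) dvd_mult_left dvd_mult_right by blast+
  have modl: "[(y mod int N) = y] (mod int l)" "[(y mod int N) = y] (mod D)" for y
    using Dn by (meson cong_dvd_modulus cong_mod_left cong_refl)+
  have cpmod: "coprime (y mod int N) (int N) \<longleftrightarrow> coprime y (int N)" for y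
    using coprime_mod_iff[of "int N" y] assms(1) by simp
  have cD: "coprime (x + f) D \<longleftrightarrow> coprime x D" if "D dvd f" for x f
    using that by (metis cong_iff_dvd_diff cong_imp_coprime cong_sym add_diff_cancel_left')
  let ?U = "units_mod N"
  have "(\<Sum>a\<in>?U. if \<not> int l dvd a + e then scale (C a) (W ((a + e) mod int N)) else 0)
      = (\<Sum>a\<in>{a\<in>?U. \<not> int l dvd a + e}. scale (C a) (W ((a + e) mod int N)))"
    by (simp add: sum.inter_filter units_mod_finite)
  also have "\<dots> = (\<Sum>x\<in>{x\<in>?U. \<not> int l dvd x - e}. scale (C x) (W x))"
  proof (rule sum.reindex_bij_witness[where j = "\<lambda>a. (a + e) mod int N" and i = "\<lambda>x. (x - e) mod int N"])
    fix a assume a: "a \<in> {a\<in>?U. \<not> int l dvd a + e}"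
    hence a1: "0 \<le> a" "a < int N" "coprime a (int N)" "\<not> int l dvd a + e" unfolding units_mod_def by auto
    show "((a + e) mod int N - e) mod int N = a" using a1 by (simp add: mod_diff_left_eq)
    have c1: "coprime (a + e) (int l)" using a1(4) assms(2)
      by (meson coprime_commute prime_imp_coprime prime_nat_int_transfer)
    have c2: "coprime (a + e) D" using cD[OF assms(4)] a1(3) assms(3) by blast
    have cp: "coprime ((a + e) mod int N) (int N)" using cpmod c1 c2 assms(3) by blast
    have "[(a + e) mod int N - e = a + e - e] (mod int l)" using cong_diff[OF modl(1) cong_refl] by blast
    hence "[(a + e) mod int N - e = a] (mod int l)" by simp
    moreover have "\<not> int l dvd a" using coprime_prime_not_dvd[OF assms(2)] a1(3) assms(3) by blast
    ultimately have "\<not> int l dvd (a + e) mod int N - e"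
      by (metis cong_dvd_iff)
    thus "(a + e) mod int N \<in> {x\<in>?U. \<not> int l dvd x - e}" using cp assms(1) unfolding units_mod_def by auto
    have "[(a + e) mod int N = a + e] (mod D)" by (rule modl(2))
    moreover have "[a + e = a] (mod D)" using assms(4) by (simp add: cong_iff_dvd_diff)
    ultimately have "[(a + e) mod int N = a] (mod D)" by (rule cong_trans)
    hence "C ((a + e) mod int N) = C a" using assms(6) cp a1(3) by blast
    thus "scale (C ((a + e) mod int N)) (W ((a + e) mod int N)) = scale (C a) (W ((a + e) mod int N))" by simp
  next
    fix x assume a: "x \<in> {x\<in>?U. \<not> int l dvd x - e}"
    hence a1: "0 \<le> x" "x < int N" "coprime x (int N)" "\<not> int l dvd x - e" unfolding units_mod_def by auto
    show "((x - e) mod int N + e) mod int N = x" using a1 by (simp add: mod_add_left_eq)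
    have c1: "coprime (x - e) (int l)" using a1(4) assms(2)
      by (meson coprime_commute prime_imp_coprime prime_nat_int_transfer)
    have "D dvd - e" using assms(4) by simp
    hence c2: "coprime (x - e) D" using cD[of "-e" x] a1(3) assms(3) by simp
    have cp: "coprime ((x - e) mod int N) (int N)" using cpmod c1 c2 assms(3) by blast
    have "[(x - e) mod int N + e = x - e + e] (mod int l)" using cong_add[OF modl(1) cong_refl] by blast
    hence "[(x - e) mod int N + e = x] (mod int l)" by simp
    moreover have "\<not> int l dvd x" using coprime_prime_not_dvd[OF assms(2)] a1(3) assms(3) by blast
    ultimately have "\<not> int l dvd (x - e) mod int N + e"
      by (metis cong_dvd_iff)
    thus "(x - e) mod int N \<in> {a\<in>?U. \<not> int l dvd a + e}" using cp assms(1) unfolding units_mod_def by auto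
  qed
  also have "\<dots> = (\<Sum>x\<in>?U. if \<not> int l dvd x - e then scale (C x) (W x) else 0)"
    by (simp add: sum.inter_filter units_mod_finite)
  finally show ?thesis .
qed


lemma reindex_mult:
  fixes scale :: "'r::comm_ring_1 \<Rightarrow> 'h::ab_group_add \<Rightarrow> 'h" and D d d' :: int
  assumes "Modules.module scale" "N > 0" "D dvd int N"
    "\<And>a b. coprime a (int N) \<Longrightarrow> coprime b (int N) \<Longrightarrow> [a = b] (mod D) \<Longrightarrow> C a = C b"
    "\<And>a b. coprime a (int N) \<Longrightarrow> coprime b (int N) \<Longrightarrow> C (a * b) = C a * C b"
    "coprime d (int N)" "[d * d' = 1] (mod int N)"
  shows "(\<Sum>a\<in>units_mod N. scale (C a) (V ((a * d') mod int N)))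
       = scale (C d) (\<Sum>y\<in>units_mod N. scale (C y) (V y))"
proof -
  interpret m: Modules.module scale by fact
  have d': "coprime d' (int N)" using assms(7) by (metis coprime_iff_invertible_int mult.commute cong_sym)
  have cpmod: "coprime (y mod int N) (int N) \<longleftrightarrow> coprime y (int N)" for y
    using coprime_mod_iff[of "int N" y] assms(2) by simp
  have inv: "((y * d') mod int N * d) mod int N = y" "((y * d) mod int N * d') mod int N = y"
    if "0 \<le> y" "y < int N" for y
  proof -
    have "[(y * d') mod int N * d = y * (d * d')] (mod int N)"
      by (metis cong_mod_left cong_refl cong_scalar_right mult.assoc mult.commute)
    also have "[y * (d * d') = y * 1] (mod int N)" using assms(7) by (rule cong_scalar_left)
    finally show "((y * d') mod int N * d) mod int N = y" using that unfolding cong_def by simp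
    have "[(y * d) mod int N * d' = y * (d * d')] (mod int N)"
      by (metis cong_mod_left cong_refl cong_scalar_right mult.assoc)
    also have "[y * (d * d') = y * 1] (mod int N)" using assms(7) by (rule cong_scalar_left)
    finally show "((y * d) mod int N * d') mod int N = y" using that unfolding cong_def by simp
  qed
  have "(\<Sum>a\<in>units_mod N. scale (C a) (V ((a * d') mod int N)))
      = (\<Sum>y\<in>units_mod N. scale (C d) (scale (C y) (V y)))"
  proof (rule sum.reindex_bij_witness[where j = "\<lambda>a. (a * d') mod int N" and i = "\<lambda>y. (y * d) mod int N"])
    fix a assume "a \<in> units_mod N"
    hence a: "0 \<le> a" "a < int N" "coprime a (int N)" unfolding units_mod_def by auto
    show "((a * d') mod int N * d) mod int N = a" using inv a by blast
    have cp: "coprime ((a * d') mod int N) (int N)" using cpmod a(3) d' by simp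
    thus "(a * d') mod int N \<in> units_mod N" using assms(2) unfolding units_mod_def by auto
    have "C d * C ((a * d') mod int N) = C (d * ((a * d') mod int N))" using assms(5)[OF assms(6) cp] by simp
    also have "\<dots> = C a"
    proof (rule assms(4))
      show "coprime (d * ((a * d') mod int N)) (int N)" using cp assms(6) by simp
      have "[d * ((a * d') mod int N) = ((a * d') mod int N * d) mod int N] (mod int N)"
        by (simp add: mult.commute)
      hence "[d * ((a * d') mod int N) = a] (mod int N)" using inv a by simp
      thus "[d * ((a * d') mod int N) = a] (mod D)" using assms(3) cong_dvd_modulus by blast
    qed (use a in auto)
    finally show "scale (C d) (scale (C ((a * d') mod int N)) (V ((a * d') mod int N)))
        = scale (C a) (V ((a * d') mod int N))" by simp
  next
    fix y assume "y \<in> units_mod N"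
    hence a: "0 \<le> y" "y < int N" "coprime y (int N)" unfolding units_mod_def by auto
    show "((y * d) mod int N * d') mod int N = y" using inv a by blast
    have cp: "coprime ((y * d) mod int N) (int N)" using cpmod a(3) assms(6) by simp
    thus "(y * d) mod int N \<in> units_mod N" using assms(2) unfolding units_mod_def by auto
  qed
  also have "\<dots> = scale (C d) (\<Sum>y\<in>units_mod N. scale (C y) (V y))"
    by (simp add: m.scale_sum_right)
  finally show ?thesis .
qed


lemma key_eq:
  fixes scale :: "'r::comm_ring_1 \<Rightarrow> 'h::ab_group_add \<Rightarrow> 'h" and D c d d' :: int
  assumes mod: "Modules.module scale" and N0: "N > 0" and pl: "prime l"
    and cop: "\<And>x. coprime x (int N) \<longleftrightarrow> coprime x (int l) \<and> coprime x D"
    and lD: "int l * D dvd int N" "coprime (int l) D" and Dc: "D dvd c" "coprime c (int l)"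
    and Cc: "\<And>a b. coprime a (int N) \<Longrightarrow> coprime b (int N) \<Longrightarrow> [a = b] (mod D) \<Longrightarrow> C a = C b"
    and Cm: "\<And>a b. coprime a (int N) \<Longrightarrow> coprime b (int N) \<Longrightarrow> C (a * b) = C a * C b"
    and dd: "coprime d (int N)" "[d * d' = 1] (mod int N)" "[d = int l] (mod D)"
    and Wc: "\<And>x y. [x = y] (mod int l * D) \<Longrightarrow> W x = W y"
  shows "(\<Sum>a\<in>units_mod N. scale (C a) (\<Sum>k<l. W ((a + int k * c) mod int N)))
     = scale (of_nat l - 1) (\<Sum>a\<in>units_mod N. scale (C a) (W a))
       + scale (C d) (\<Sum>y\<in>units_mod N. scale (C y) (W (int l * y)))"
proof -
  interpret m: Modules.module scale by fact
  let ?U = "units_mod N" and ?n = "int N" and ?L = "int l"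
  have Dn: "D dvd int N" "int l dvd int N" using lD(1) dvd_mult_left dvd_mult_right by blast+
  have modl: "[(y mod int N) = y] (mod int l)" "[(y mod int N) = y] (mod D)" for y
    using Dn by (meson cong_dvd_modulus cong_mod_left cong_refl)+
  define P where "P a k \<longleftrightarrow> ?L dvd a + int k * c" for a k
  have B: "(\<Sum>k<l. if P a k then W ((a + int k * c) mod ?n) else 0) = W (?L * ((a * d') mod ?n))"
    if a: "a \<in> ?U" for a
  proof -
    obtain k0 where k0: "k0 < l" "\<And>k. k < l \<Longrightarrow> (?L dvd a + int k * c \<longleftrightarrow> k = k0)"
      using unique_k[OF pl Dc(2), of a] by blast
    have "(\<Sum>k<l. if P a k then W ((a + int k * c) mod ?n) else 0) = W ((a + int k0 * c) mod ?n)"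
      by (rule sum_single_k[OF k0(1)]) (use k0(2) in \<open>simp add: P_def\<close>)
    also have "\<dots> = W (?L * ((a * d') mod ?n))"
    proof (rule Wc, rule coprime_cong_mult[OF _ _ lD(2)])
      have "[(a + int k0 * c) mod ?n = a + int k0 * c] (mod ?L)" by (rule modl(1))
      moreover have "[a + int k0 * c = 0] (mod ?L)" using k0 by (simp add: cong_0_iff)
      moreover have "[0 = ?L * ((a * d') mod ?n)] (mod ?L)" by (simp add: cong_0_iff cong_sym)
      ultimately show "[(a + int k0 * c) mod ?n = ?L * ((a * d') mod ?n)] (mod ?L)"
        using cong_trans by blast
      have "[(a + int k0 * c) mod ?n = a + int k0 * c] (mod D)" by (rule modl(2))
      moreover have "[a + int k0 * c = a] (mod D)" using Dc(1) by (simp add: cong_iff_dvd_diff)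
      moreover have "[a = ?L * ((a * d') mod ?n)] (mod D)"
      proof -
        have "[?L * ((a * d') mod ?n) = d * (a * d')] (mod D)"
          using cong_mult[OF cong_sym[OF dd(3)] modl(2)[of "a * d'"]] by simp
        moreover have "[d * (a * d') = a * (d * d')] (mod D)" by (simp add: ac_simps)
        moreover have "[a * (d * d') = a * 1] (mod D)"
          using cong_scalar_left[OF cong_dvd_modulus[OF dd(2) Dn(1)]] by blast
        ultimately show ?thesis using cong_trans cong_sym by (metis mult_1_right)
      qed
      ultimately show "[(a + int k0 * c) mod ?n = ?L * ((a * d') mod ?n)] (mod D)"
        using cong_trans by blast
    qed
    finally show ?thesis .
  qed
  have A: "(\<Sum>a\<in>?U. scale (C a) (\<Sum>k<l. if \<not> P a k then W ((a + int k * c) mod ?n) else 0))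
       = scale (of_nat l - 1) (\<Sum>a\<in>?U. scale (C a) (W a))"
  proof -
    have "(\<Sum>a\<in>?U. scale (C a) (\<Sum>k<l. if \<not> P a k then W ((a + int k * c) mod ?n) else 0))
       = (\<Sum>a\<in>?U. \<Sum>k<l. if \<not> ?L dvd a + int k * c then scale (C a) (W ((a + int k * c) mod ?n)) else 0)"
      by (simp add: m.scale_sum_right P_def if_distrib cong: if_cong)
    also have "\<dots> = (\<Sum>k<l. \<Sum>a\<in>?U. if \<not> ?L dvd a + int k * c then scale (C a) (W ((a + int k * c) mod ?n)) else 0)"
      by (rule sum.swap)
    also have "\<dots> = (\<Sum>k<l. \<Sum>x\<in>?U. if \<not> ?L dvd x - int k * c then scale (C x) (W x) else 0)"
      by (rule sum.cong[OF refl], rule reindex_filter[OF N0 pl cop _ lD(1) Cc]) (use Dc(1) in simp)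
    also have "\<dots> = (\<Sum>x\<in>?U. \<Sum>k<l. if \<not> ?L dvd x - int k * c then scale (C x) (W x) else 0)"
      by (rule sum.swap)
    also have "\<dots> = (\<Sum>x\<in>?U. scale (of_nat l - 1) (scale (C x) (W x)))"
    proof (rule sum.cong[OF refl])
      fix x assume x: "x \<in> ?U"
      define Z where "Z = scale (C x) (W x)"
      obtain k0 where k0: "k0 < l" "\<And>k. k < l \<Longrightarrow> (?L dvd x + int k * (- c) \<longleftrightarrow> k = k0)"
        using unique_k[OF pl, of "-c" x] Dc(2) by auto
      have "(\<Sum>k<l. if \<not> ?L dvd x - int k * c then Z else 0)
          = (\<Sum>k<l. Z - (if ?L dvd x + int k * (- c) then Z else 0))"
        by (rule sum.cong) auto
      also have "\<dots> = (\<Sum>k<l. Z) - (\<Sum>k<l. if ?L dvd x + int k * (- c) then Z else 0)"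
        by (rule sum_subtractf)
      also have "(\<Sum>k<l. if ?L dvd x + int k * (- c) then Z else 0) = Z"
        by (rule sum_single_k[OF k0(1) k0(2)])
      also have "(\<Sum>k<l. Z) = scale (of_nat l) Z" by (simp add: m.sum_constant_scale)
      also have "scale (of_nat l) Z - Z = scale (of_nat l - 1) Z" by (simp add: m.scale_left_diff_distrib)
      finally show "(\<Sum>k<l. if \<not> ?L dvd x - int k * c then scale (C x) (W x) else 0)
          = scale (of_nat l - 1) (scale (C x) (W x))" unfolding Z_def .
    qed
    also have "\<dots> = scale (of_nat l - 1) (\<Sum>a\<in>?U. scale (C a) (W a))"
      by (simp add: m.scale_sum_right)
    finally show ?thesis .
  qed
  have "(\<Sum>a\<in>?U. scale (C a) (\<Sum>k<l. W ((a + int k * c) mod ?n)))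
      = (\<Sum>a\<in>?U. scale (C a) (\<Sum>k<l. if P a k then W ((a + int k * c) mod ?n) else 0)
          + scale (C a) (\<Sum>k<l. if \<not> P a k then W ((a + int k * c) mod ?n) else 0))"
  proof (rule sum.cong[OF refl])
    fix a
    have "(\<Sum>k<l. W ((a + int k * c) mod ?n)) = (\<Sum>k<l. (if P a k then W ((a + int k * c) mod ?n) else 0)
          + (if \<not> P a k then W ((a + int k * c) mod ?n) else 0))"
      by (rule sum.cong) auto
    thus "scale (C a) (\<Sum>k<l. W ((a + int k * c) mod ?n)) = scale (C a) (\<Sum>k<l. if P a k then W ((a + int k * c) mod ?n) else 0)
          + scale (C a) (\<Sum>k<l. if \<not> P a k then W ((a + int k * c) mod ?n) else 0)"
      by (simp add: sum.distrib m.scale_right_distrib)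
  qed
  also have "\<dots> = (\<Sum>a\<in>?U. scale (C a) (W (?L * ((a * d') mod ?n))))
       + (\<Sum>a\<in>?U. scale (C a) (\<Sum>k<l. if \<not> P a k then W ((a + int k * c) mod ?n) else 0))"
    by (simp add: sum.distrib B)
  also have "(\<Sum>a\<in>?U. scale (C a) (W (?L * ((a * d') mod ?n))))
       = scale (C d) (\<Sum>y\<in>?U. scale (C y) (W (?L * y)))"
    by (rule reindex_mult[OF mod N0 Dn(1) Cc Cm dd(1,2), where V = "\<lambda>y. W (?L * y)"])
  finally show ?thesis using A by (simp add: add.commute)
qed


lemma gcd_lemma:
  fixes a b n X Y :: int
  assumes "coprime a n" "coprime b n" "coprime X Y"
  shows "gcd (gcd (X * a) (Y * b)) n = 1"
proof -
  define q where "q = gcd (gcd (X * a) (Y * b)) n"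
  have qn: "q dvd n" and qa: "q dvd X * a" and qb: "q dvd Y * b" unfolding q_def by (auto intro: dvd_trans[OF gcd_dvd1])
  have "coprime q a" using assms(1) qn by (meson coprime_commute coprime_divisors dvd_refl)
  hence "q dvd X" using qa coprime_dvd_mult_left_iff by blast
  moreover have "coprime q b" using assms(2) qn by (meson coprime_commute coprime_divisors dvd_refl)
  hence "q dvd Y" using qb coprime_dvd_mult_left_iff by blast
  ultimately have "is_unit q" using assms(3) by (meson coprime_common_divisor)
  moreover have "q \<ge> 0" unfolding q_def by simp
  ultimately show ?thesis unfolding q_def by simp
qed

lemma symb_cong:
  assumes "modsym_space N cusp scale symb dia" "[u = u'] (mod int N)" "[v = v'] (mod int N)"
  shows "symb u v = symb u' v'"
proof -
  have "\<forall>u v. symb u v = symb (u mod int N) (v mod int N)" using assms(1) unfolding modsym_space_def by blast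
  thus ?thesis using assms(2,3) unfolding cong_def by metis
qed


definition Wf :: "nat \<Rightarrow> ('r::comm_ring_1 \<Rightarrow> 'h::ab_group_add \<Rightarrow> 'h) \<Rightarrow> (int \<Rightarrow> int \<Rightarrow> 'h)
    \<Rightarrow> (int \<Rightarrow> 'r) \<Rightarrow> int \<Rightarrow> nat \<Rightarrow> int \<Rightarrow> 'h" where
  "Wf N scale symb \<psi> G h x = (\<Sum>b\<in>units_mod N. scale (cinv N \<psi> b) (symb (G * x) (int h * b)))"

lemma alpha_Wf:
  assumes "Modules.module scale"
  shows "alpha N scale symb \<chi> \<psi> g h = scale (ring_inv ((of_nat (totient N))^2))
     (\<Sum>a\<in>units_mod N. scale (cinv N \<chi> a) (Wf N scale symb \<psi> (int g) h a))"
proof -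
  interpret m: Modules.module scale by fact
  show ?thesis unfolding alpha_def Wf_def by (simp add: m.scale_sum_right)
qed

lemma common:
  fixes scale :: "'r::comm_ring_1 \<Rightarrow> 'h::ab_group_add \<Rightarrow> 'h" and w :: int
  assumes ms: "modsym_space N cusp scale symb dia" and Uo: "U_op N cusp scale symb dia l U"
    and N0: "N > 0" and pl: "prime l" and t0: "0 < t" and ND: "N = l^t * D"
    and w: "[int g * w = 1] (mod int l)" and gh: "coprime (int (l^t * g)) (int h)"
    and cc: "cusp \<longrightarrow> \<not> int N dvd int (l^t * g)"
  shows "U (\<Sum>a\<in>units_mod N. scale (cinv N \<chi> a) (Wf N scale symb \<psi> (int (l^(t-1) * g)) h (int l * a)))
     = (\<Sum>a\<in>units_mod N. scale (cinv N \<chi> a)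
          (\<Sum>k<l. Wf N scale symb \<psi> (int (l^(t-1) * g)) h ((a + int k * (int D * w)) mod int N)))"
proof -
  have msd: "Modules.module scale" using ms unfolding modsym_space_def by blast
  interpret m: Modules.module scale by fact
  have hom: "Modules.module_hom scale scale U" using Uo unfolding U_op_def by blast
  interpret h: Modules.module_hom scale scale U by fact
  have Uf: "\<And>u v. unimod N (int l * u) v \<Longrightarrow> (cusp \<longrightarrow> (int l * u) mod int N \<noteq> 0) \<Longrightarrow>
        U (symb (int l * u) v) = (\<Sum>k<l. symb (u + int k * int (N div l)) v)"
    using Uo unfolding U_op_def by blast
  let ?G = "int (l^(t-1) * g)" and ?c = "int D * w" and ?n = "int N"
  have ltg: "int (l^t * g) = int l * ?G" using t0 by (cases t) auto
  have Ndl: "int (N div l) = int l ^ (t - 1) * int D"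
  proof -
    have "N = l * (l^(t-1) * D)" using ND t0 by (cases t) auto
    hence "N div l = l^(t-1) * D" using pl prime_gt_0_nat by simp
    thus ?thesis by simp
  qed
  have nLD: "?n = int l * (int l ^ (t - 1) * int D)" using ND t0 by (cases t) auto
  have congk: "[?G * a + int k * int (N div l) = ?G * ((a + int k * ?c) mod ?n)] (mod ?n)" for a k
  proof -
    have "[?G * ((a + int k * ?c) mod ?n) = ?G * (a + int k * ?c)] (mod ?n)"
      by (rule cong_scalar_left) simp
    moreover have "[?G * (a + int k * ?c) = ?G * a + int k * int (N div l)] (mod ?n)"
    proof -
      obtain z where z: "int g * w - 1 = int l * z" using w
        by (metis cong_iff_dvd_diff dvd_def)
      have "?G * (a + int k * ?c) - (?G * a + int k * int (N div l))
          = int k * (int l ^ (t - 1) * int D) * (int g * w - 1)"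
        unfolding Ndl by (simp add: algebra_simps)
      also have "\<dots> = ?n * (int k * z)" unfolding z nLD by (simp add: algebra_simps)
      finally show ?thesis by (simp add: cong_iff_dvd_diff)
    qed
    ultimately show ?thesis using cong_sym cong_trans by blast
  qed
  have step: "U (Wf N scale symb \<psi> ?G h (int l * a))
      = (\<Sum>k<l. Wf N scale symb \<psi> ?G h ((a + int k * ?c) mod ?n))" if a: "a \<in> units_mod N" for a
  proof -
    have a1: "coprime a ?n" using a unfolding units_mod_def by auto
    have "U (Wf N scale symb \<psi> ?G h (int l * a))
        = (\<Sum>b\<in>units_mod N. scale (cinv N \<psi> b) (U (symb (int l * (?G * a)) (int h * b))))"
      unfolding Wf_def by (simp add: h.sum h.scale ac_simps)
    also have "\<dots> = (\<Sum>b\<in>units_mod N. scale (cinv N \<psi> b)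
          (\<Sum>k<l. symb (?G * ((a + int k * ?c) mod ?n)) (int h * b)))"
    proof (rule sum.cong[OF refl])
      fix b assume b: "b \<in> units_mod N"
      have b1: "coprime b ?n" using b unfolding units_mod_def by auto
      have e: "int l * (?G * a) = int (l^t * g) * a" by (simp only: ltg mult.assoc)
      have un: "unimod N (int l * (?G * a)) (int h * b)"
        unfolding unimod_def e using gcd_lemma[OF a1 b1 gh] .
      have cu: "cusp \<longrightarrow> (int l * (?G * a)) mod ?n \<noteq> 0"
      proof
        assume "cusp"
        show "(int l * (?G * a)) mod ?n \<noteq> 0"
        proof
          assume "(int l * (?G * a)) mod ?n = 0"
          hence "?n dvd int (l^t * g) * a" unfolding e by (simp add: mod_eq_0_iff_dvd)
          hence "?n dvd int (l^t * g)" using a1 coprime_commute coprime_dvd_mult_left_iff by blast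
          thus False using cc \<open>cusp\<close> by blast
        qed
      qed
      have "U (symb (int l * (?G * a)) (int h * b)) = (\<Sum>k<l. symb (?G * a + int k * int (N div l)) (int h * b))"
        by (rule Uf[OF un cu])
      also have "\<dots> = (\<Sum>k<l. symb (?G * ((a + int k * ?c) mod ?n)) (int h * b))"
        by (rule sum.cong[OF refl], rule symb_cong[OF ms congk cong_refl])
      finally show "scale (cinv N \<psi> b) (U (symb (int l * (?G * a)) (int h * b)))
          = scale (cinv N \<psi> b) (\<Sum>k<l. symb (?G * ((a + int k * ?c) mod ?n)) (int h * b))" by simp
    qed
    also have "\<dots> = (\<Sum>k<l. Wf N scale symb \<psi> ?G h ((a + int k * ?c) mod ?n))"
      unfolding Wf_def by (simp add: m.scale_sum_right sum.swap[where A = "units_mod N"])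
    finally show ?thesis .
  qed
  show ?thesis unfolding h.sum h.scale by (rule sum.cong[OF refl]) (simp only: step)
qed


theorem proposition2p20:
  fixes p M N l s t g h :: nat and cusp :: bool
    and scale :: "'r::comm_ring_1 \<Rightarrow> 'h::ab_group_add \<Rightarrow> 'h"
    and symb :: "int \<Rightarrow> int \<Rightarrow> 'h" and dia :: "int \<Rightarrow> 'h \<Rightarrow> 'h" and U :: "'h \<Rightarrow> 'h"
    and \<theta> \<chi> \<psi> :: "int \<Rightarrow> 'r"
  assumes "prime p" and "odd p" and "0 < M" and "\<not> p dvd M * totient M" and "N = M * p"
    and "\<exists>c::'r. of_nat (totient N) * c = 1"
    and "modsym_space N cusp scale symb dia"
    and "prime l" and "l dvd N" and "s = multiplicity l N"
    and "U_op N cusp scale symb dia l U"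
    and "g dvd N" and "h dvd N" and "coprime g h" and "\<not> l dvd g" and "\<not> l dvd h"
    and "dchar N \<theta>" and "\<theta> (-1) = 1"
    and "dchar N \<chi>"
    and "\<psi> = (\<lambda>a. \<theta> a * cinv N \<chi> a)"
    and "0 < t" and "t \<le> s" and "conductor N \<chi> dvd N div l ^ t"
  shows "(t < s \<longrightarrow>
            U (alpha N scale symb \<chi> \<psi> (l ^ t * g) h)
              = scale (of_nat l) (alpha N scale symb \<chi> \<psi> (l ^ (t - 1) * g) h))
       \<and> (t = s \<and> (cusp \<longrightarrow> l ^ s * g \<noteq> N) \<longrightarrow>
            U (alpha N scale symb \<chi> \<psi> (l ^ s * g) h)
              - scale (prim_val N (cinv N \<chi>) l) (alpha N scale symb \<chi> \<psi> (l ^ s * g) h)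
              = scale (of_nat l - 1) (alpha N scale symb \<chi> \<psi> (l ^ (s - 1) * g) h))"
proof -
  note ms = assms(7) and Uo = assms(11) and pl = assms(8) and dchi = assms(19)
  have N0: "N > 0" using assms(3,5,1) prime_gt_0_nat by simp
  have l1: "l > 1" using pl prime_gt_1_nat by blast
  have msd: "Modules.module scale" using ms unfolding modsym_space_def by blast
  interpret m: Modules.module scale by fact
  have hom: "Modules.module_hom scale scale U" using Uo unfolding U_op_def by blast
  interpret hm: Modules.module_hom scale scale U by fact
  have nu: "\<not> is_unit l" "N \<noteq> 0" using l1 N0 by auto
  have s1: "s \<ge> 1" using assms(9,10) multiplicity_gt_zero_iff[OF nu(2,1)] by simp
  define N0 where "N0 = N div l ^ s"
  have NN0: "N = l ^ s * N0" unfolding N0_def using multiplicity_dvd[of l N] assms(10) by simp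
  have lN0: "\<not> l dvd N0" unfolding N0_def assms(10)
    using multiplicity_decompose[OF nu(2,1)] .
  have clN0: "coprime (int l) (int N0)" using lN0 pl
    by (simp add: prime_imp_coprime prime_nat_int_transfer)
  have cgl: "coprime g (l ^ m)" for m using assms(15) pl prime_imp_power_coprime by blast
  have gN0: "g dvd N0" using assms(12) cgl[of s] NN0 coprime_dvd_mult_right_iff by metis
  define D where "D = N div l ^ t"
  have ND: "N = l ^ t * D" "D = l ^ (s - t) * N0"
  proof -
    have "l ^ s = l ^ t * l ^ (s - t)" using assms(22) by (simp add: power_add[symmetric])
    hence "N = l ^ t * (l ^ (s - t) * N0)" using NN0 by simp
    moreover have "D = l ^ (s - t) * N0" unfolding D_def using calculation l1 by simp
    ultimately show "N = l ^ t * D" "D = l ^ (s - t) * N0" by simp_all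
  qed
  have cgh: "coprime (int (l ^ t * g)) (int h)"
  proof -
    have "coprime h (l ^ t)" using assms(16) pl prime_imp_power_coprime by blast
    thus ?thesis using assms(14) by (simp add: coprime_commute)
  qed
  obtain w where w: "[int g * w = 1] (mod int l)"
  proof -
    have "coprime (int g) (int l)" using cgl[of 1] by simp
    thus ?thesis using that cong_solve_coprime_int by blast
  qed
  have cwl: "coprime w (int l)" using w by (metis coprime_iff_invertible_int mult.commute)
  let ?C = "cinv N \<chi>" and ?n = "int N" and ?L = "int l"
  have Cm: "\<And>a b. coprime a ?n \<Longrightarrow> coprime b ?n \<Longrightarrow> ?C (a * b) = ?C a * ?C b"
    using cinv_mult[OF dchi] by blast
  have CcD: "\<And>a b. coprime a ?n \<Longrightarrow> coprime b ?n \<Longrightarrow> [a = b] (mod int D) \<Longrightarrow> ?C a = ?C b"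
  proof -
    fix a b assume "coprime a ?n" "coprime b ?n" "[a = b] (mod int D)"
    moreover have "int (conductor N \<chi>) dvd int D" using assms(23) unfolding D_def by simp
    ultimately show "?C a = ?C b" using cinv_cond[OF dchi N0] cong_dvd_modulus by blast
  qed
  let ?r = "ring_inv ((of_nat (totient N) :: 'r)^2)"
  let ?W = "Wf N scale symb \<psi> (int (l^(t-1) * g)) h"
  have ltg: "int (l^t * g) = ?L * int (l^(t-1) * g)" using assms(21) by (cases t) auto
  have A1: "alpha N scale symb \<chi> \<psi> (l ^ t * g) h = scale ?r (\<Sum>a\<in>units_mod N. scale (?C a) (?W (?L * a)))"
    unfolding alpha_Wf[OF msd] Wf_def ltg by (simp add: ac_simps)
  have A2: "alpha N scale symb \<chi> \<psi> (l ^ (t - 1) * g) h = scale ?r (\<Sum>a\<in>units_mod N. scale (?C a) (?W a))"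
    by (rule alpha_Wf[OF msd])
  have cop: "coprime x ?n \<longleftrightarrow> coprime x ?L \<and> coprime x (int N0)" for x
    using NN0 s1 by simp
  show ?thesis
  proof (intro conjI impI)
    assume ts: "t < s"
    have cc: "cusp \<longrightarrow> \<not> ?n dvd int (l^t * g)"
    proof (intro impI notI)
      assume "?n dvd int (l^t * g)"
      hence "l ^ s * N0 dvd l ^ t * g" using NN0 by (metis int_dvd_int_iff)
      hence "l ^ s dvd l ^ t * g" using dvd_mult_left by blast
      hence "l ^ s dvd l ^ t" using cgl[of s] coprime_dvd_mult_left_iff coprime_commute by blast
      hence "l ^ s \<le> l ^ t" using l1 by (simp add: dvd_imp_le)
      hence "s \<le> t" using power_le_imp_le_exp[OF l1] by blast
      thus False using ts by simp
    qed
    have copD: "coprime x ?n \<longleftrightarrow> coprime x (int D)" for x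
      using ND ts assms(21) by simp
    have "U (alpha N scale symb \<chi> \<psi> (l ^ t * g) h)
        = scale ?r (\<Sum>a\<in>units_mod N. scale (?C a) (\<Sum>k<l. ?W ((a + int k * (int D * w)) mod ?n)))"
      unfolding A1 hm.scale using common[OF ms Uo N0 pl assms(21) ND(1) w cgh, of \<chi> \<psi>] cc by simp
    also have "\<dots> = scale ?r (scale (of_nat l) (\<Sum>a\<in>units_mod N. scale (?C a) (?W a)))"
      by (subst key_lt[OF msd N0 copD _ _ CcD]) (simp_all add: ND(1))
    finally show "U (alpha N scale symb \<chi> \<psi> (l ^ t * g) h)
              = scale (of_nat l) (alpha N scale symb \<chi> \<psi> (l ^ (t - 1) * g) h)"
      unfolding A2 by (simp add: mult.commute)
  next
    assume ts: "t = s \<and> (cusp \<longrightarrow> l ^ s * g \<noteq> N)"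
    hence tsd: "t = s" and cn: "cusp \<longrightarrow> l ^ s * g \<noteq> N" by auto
    have DN0: "D = N0" using ND(2) tsd by simp
    have cc: "cusp \<longrightarrow> \<not> ?n dvd int (l^t * g)"
    proof
      assume c: cusp
      show "\<not> ?n dvd int (l^t * g)"
      proof
        assume "?n dvd int (l^t * g)"
        hence "l ^ s * N0 dvd l ^ s * g" using NN0 tsd by (metis int_dvd_int_iff)
        hence "N0 dvd g" using l1 by simp
        hence "g = N0" using gN0 by (simp add: dvd_antisym)
        thus False using cn c NN0 by simp
      qed
    qed
    obtain z where z: "[int N0 * z = 1] (mod ?L)"
      using cong_solve_coprime_int[of "int N0" ?L] clN0 coprime_commute by blast
    define d where "d = ?L + int N0 * z"
    have dL: "[d = ?L] (mod int N0)" unfolding d_def by (simp add: cong_iff_dvd_diff)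
    have cdL: "coprime d ?L"
    proof -
      have "?L dvd int N0 * z - 1" using z by (simp add: cong_iff_dvd_diff)
      hence "?L dvd ?L + (int N0 * z - 1)" by simp
      hence "[d = 1] (mod ?L)" unfolding d_def by (simp add: cong_iff_dvd_diff add_diff_eq)
      thus ?thesis by (metis cong_imp_coprime cong_sym coprime_1_left)
    qed
    have cdN0: "coprime d (int N0)" using dL clN0 by (metis cong_imp_coprime cong_sym)
    have cdn: "coprime d ?n" using cop cdL cdN0 by blast
    obtain d' where d': "[d * d' = 1] (mod ?n)" using inv_exists[OF cdn] by blast
    have lD: "?L * int N0 dvd ?n"
    proof -
      have "l dvd l ^ s" using s1 by (simp add: dvd_power)
      hence "l * N0 dvd N" using NN0 by (simp add: mult_dvd_mono)
      thus ?thesis by (metis int_dvd_int_iff of_nat_mult)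
    qed
    have Dc: "int N0 dvd int N0 * w" "coprime (int N0 * w) ?L" using cwl clN0 by (simp_all add: coprime_commute)
    have CcN0: "\<And>a b. coprime a ?n \<Longrightarrow> coprime b ?n \<Longrightarrow> [a = b] (mod int N0) \<Longrightarrow> ?C a = ?C b"
      using CcD DN0 by blast
    have Wc: "?W x = ?W y" if "[x = y] (mod ?L * int N0)" for x y
      unfolding Wf_def
    proof (rule sum.cong[OF refl])
      fix b
      have "[int (l^(t-1) * g) * x = int (l^(t-1) * g) * y] (mod ?n)"
      proof -
        have "?L * int N0 dvd x - y" using that by (simp add: cong_iff_dvd_diff)
        hence "int (l^(t-1)) * (?L * int N0) dvd int (l^(t-1)) * int g * (x - y)"
          by (simp add: mult_dvd_mono)
        moreover have "int (l^(t-1)) * (?L * int N0) = ?n" using NN0 tsd s1 by (cases s) auto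
        ultimately show ?thesis by (simp add: cong_iff_dvd_diff algebra_simps)
      qed
      thus "scale (cinv N \<psi> b) (symb (int (l^(t-1) * g) * x) (int h * b))
          = scale (cinv N \<psi> b) (symb (int (l^(t-1) * g) * y) (int h * b))"
        using symb_cong[OF ms] by (metis cong_refl)
    qed
    have UX: "U (alpha N scale symb \<chi> \<psi> (l ^ t * g) h)
        = scale ?r (\<Sum>a\<in>units_mod N. scale (?C a) (\<Sum>k<l. ?W ((a + int k * (int N0 * w)) mod ?n)))"
      unfolding A1 hm.scale using common[OF ms Uo N0 pl assms(21) ND(1) w cgh, of \<chi> \<psi>] cc DN0 by simp
    have KE: "(\<Sum>a\<in>units_mod N. scale (?C a) (\<Sum>k<l. ?W ((a + int k * (int N0 * w)) mod ?n)))
       = scale (of_nat l - 1) (\<Sum>a\<in>units_mod N. scale (?C a) (?W a))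
         + scale (?C d) (\<Sum>y\<in>units_mod N. scale (?C y) (?W (?L * y)))"
      by (rule key_eq[OF msd N0 pl cop lD clN0 Dc CcN0 Cm cdn d' dL Wc])
    have PV: "prim_val N (cinv N \<chi>) l = ?C d"
    proof -
      define f where "f = conductor N \<chi>"
      have fc: "conductor N (cinv N \<chi>) = f" unfolding f_def by (rule conductor_cinv[OF dchi])
      have fN0: "int f dvd int N0" using assms(23) tsd unfolding f_def N0_def by simp
      have clf: "coprime (int l) (int f)" using clN0 fN0 by (meson coprime_divisors dvd_refl)
      have ex: "\<exists>a. coprime a ?n \<and> [a = int l] (mod int f)"
        using cdn dL fN0 cong_dvd_modulus by blast
      define a0 where "a0 = (SOME a. coprime a ?n \<and> [a = int l] (mod int f))"
      have a0: "coprime a0 ?n" "[a0 = int l] (mod int f)" using someI_ex[OF ex] unfolding a0_def by blast+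
      have "prim_val N (cinv N \<chi>) l = ?C a0"
        unfolding prim_val_def Let_def fc a0_def using clf by simp
      also have "\<dots> = ?C d"
      proof (rule cinv_cond[OF dchi N0 a0(1) cdn])
        have "[d = int l] (mod int f)" using dL fN0 cong_dvd_modulus by blast
        thus "[a0 = d] (mod int (conductor N \<chi>))" using a0(2) unfolding f_def
          by (metis cong_sym cong_trans)
      qed
      finally show ?thesis .
    qed
    show "U (alpha N scale symb \<chi> \<psi> (l ^ s * g) h)
              - scale (prim_val N (cinv N \<chi>) l) (alpha N scale symb \<chi> \<psi> (l ^ s * g) h)
              = scale (of_nat l - 1) (alpha N scale symb \<chi> \<psi> (l ^ (s - 1) * g) h)"
      using UX KE PV A1 A2 tsd
      by (simp add: m.scale_right_distrib m.scale_right_diff_distrib mult.commute)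
  qed
qed

end
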